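(* If some set maximizing $\overline{re}$ over nonempty subsets of $\mathbb{S}$ has cardinality $k^*\ge3$, then $\{1,2,\dots,k^*\}$ maximizes $\overline{re}$ over nonempty subsets of $\mathbb{S}$ (no assumption on the size of the equilibrium demands is needed).
   Context: Market model: sellers $\mathbb{S}=\{1,\dots,n\}$, product qualities $\theta_1\ge\dots\ge\theta_n\ge0$. For displayed set $S$ and prices $p_i\ge0$: $a_i=e^{\theta_i-p_i}$, MNL demand $q_i=a_i/(1+\sum_{j\in S}a_j)$; sellers in $S$ play the Bertrand game (seller $i$ chooses $p_i\ge0$ to maximize $p_iq_i$). $V:(0,\infty)\to(0,1)$: $V(x)=$ the unique $v\in(0,1)$ with $v\exp(v/(1-v))=x$. For nonempty $S$, $\bar q_0(S)\in(0,1)$ is the unique solution of $\sum_{i\in S}V(\bar q_0e^{\theta_i-1})=1-\bar q_0$, $\bar q_i(S)=V(\bar q_0(S)e^{\theta_i-1})$, and $\overline{re}(S)=\sum_{i\in S}\frac{\bar q_i(S)}{1-\bar q_i(S)}$. *)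

theory Defs
  imports Complex_Main
begin

definition Vfun :: "real \<Rightarrow> real" where
  "Vfun x = (THE v. 0 < v \<and> v < 1 \<and> v * exp (v / (1 - v)) = x)"

text \<open>Equilibrium no-purchase share of displayed set S, for qualities theta.\<close>
definition q0bar :: "(nat \<Rightarrow> real) \<Rightarrow> nat set \<Rightarrow> real" where
  "q0bar theta S = (THE q. 0 < q \<and> q < 1 \<and>
       (\<Sum>i\<in>S. Vfun (q * exp (theta i - 1))) = 1 - q)"

definition qbar :: "(nat \<Rightarrow> real) \<Rightarrow> nat set \<Rightarrow> nat \<Rightarrow> real" where
  "qbar theta S i = Vfun (q0bar theta S * exp (theta i - 1))"

definition rebar :: "(nat \<Rightarrow> real) \<Rightarrow> nat set \<Rightarrow> real" where
  "rebar theta S = (\<Sum>i\<in>S. qbar theta S i / (1 - qbar theta S i))"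

definition is_rebar_max :: "nat \<Rightarrow> (nat \<Rightarrow> real) \<Rightarrow> nat set \<Rightarrow> bool" where
  "is_rebar_max n theta S \<longleftrightarrow> S \<subseteq> {1..n} \<and> S \<noteq> {} \<and>
     (\<forall>T. T \<subseteq> {1..n} \<and> T \<noteq> {} \<longrightarrow> rebar theta T \<le> rebar theta S)"

end

theory Submission
  imports Defs
begin


definition hh :: "real \<Rightarrow> real" where "hh r = ln r + r - ln (1 + r)"
definition U :: "real \<Rightarrow> real" where "U y = (THE r. 0 < r \<and> hh r = y)"
definition cc :: "real \<Rightarrow> real" where "cc r = r * (1 + r) / (1 + r + r\<^sup>2)"

lemma hh_deriv: assumes "0 < r" shows "(hh has_real_derivative (1/r + 1 - 1/(1+r))) (at r)"
proof -
  have d1: "DERIV ln r :> inverse r" using assms by (rule DERIV_ln)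
  have "DERIV ln (1+r) :> inverse (1+r)" by (rule DERIV_ln) (use assms in simp)
  moreover have "((\<lambda>z. 1 + z) has_real_derivative 1) (at r)"
    by (auto intro!: derivative_eq_intros)
  ultimately have d2: "((\<lambda>z. ln (1 + z)) has_real_derivative inverse (1+r) * 1) (at r)"
    using DERIV_chain2[where f=ln and g="\<lambda>z. 1+z" and x=r] by (metis mult.right_neutral)
  have d3: "((\<lambda>z. z) has_real_derivative 1) (at r)" by (rule DERIV_ident)
  have "((\<lambda>r. ln r + r - ln (1 + r)) has_real_derivative (inverse r + 1 - inverse (1+r) * 1)) (at r)"
    by (intro DERIV_diff DERIV_add d1 d2 d3)
  then show ?thesis unfolding hh_def[abs_def] by (simp add: divide_inverse)
qed

lemma hh_deriv_pos: "0 < (r::real) \<Longrightarrow> 0 < 1/r + 1 - 1/(1+r)"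
proof -
  assume r: "0 < r"
  have "1/(1+r) < 1" using r by (subst divide_less_eq_1) simp
  moreover have "0 < 1/r" using r by simp
  ultimately show ?thesis by linarith
qed

lemma hh_mono: assumes "0 < a" "a < b" shows "hh a < hh b"
proof (rule DERIV_pos_imp_increasing[OF assms(2)])
  fix x assume "a \<le> x" "x \<le> b"
  then have "0 < x" using assms by simp
  then show "\<exists>y. DERIV hh x :> y \<and> 0 < y" using hh_deriv hh_deriv_pos by blast
qed

lemma hh_isCont: "0 < r \<Longrightarrow> isCont hh r"
  using hh_deriv DERIV_isCont by blast

lemma hh_ge_ln: "0 < r \<Longrightarrow> ln r \<le> hh r"
  unfolding hh_def using ln_add_one_self_le_self[of r] by simp

lemma hh_le: "0 < r \<Longrightarrow> r \<le> 1 \<Longrightarrow> hh r \<le> ln r + 1"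
proof -
  assume "0 < r" "r \<le> 1"
  moreover have "0 \<le> ln (1+r)" using \<open>0 < r\<close> by simp
  ultimately show ?thesis unfolding hh_def by linarith
qed

lemma hh_surj: "\<exists>r>0. hh r = y"
proof -
  define r1 where "r1 = min 1 (exp (y - 1))"
  define r2 where "r2 = exp y"
  have r1: "0 < r1" "r1 \<le> 1" unfolding r1_def by auto
  have "r1 \<le> exp (y - 1)" unfolding r1_def by simp
  then have "ln r1 \<le> ln (exp (y - 1))" using r1 by (subst ln_le_cancel_iff) auto
  then have "ln r1 \<le> y - 1" by simp
  then have h1: "hh r1 \<le> y" using hh_le[OF r1] by linarith
  have h2: "y \<le> hh r2" using hh_ge_ln[of r2] unfolding r2_def by simp
  have le: "r1 \<le> r2"
  proof (rule ccontr)
    assume "\<not> r1 \<le> r2"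
    then have "hh r2 < hh r1" using hh_mono[of r2 r1] unfolding r2_def by simp
    with h1 h2 show False by simp
  qed
  have "\<exists>x. r1 \<le> x \<and> x \<le> r2 \<and> hh x = y"
    using h1 h2 le r1 by (intro IVT) (auto intro!: hh_isCont)
  then obtain x where "r1 \<le> x" "hh x = y" by blast
  then show ?thesis using r1 by (intro exI[of _ x]) auto
qed

lemma hh_inj: assumes "0 < a" "0 < b" "hh a = hh b" shows "a = b"
proof (rule ccontr)
  assume "a \<noteq> b"
  then consider "a < b" | "b < a" by linarith
  then show False
  proof cases
    case 1 then show ?thesis using hh_mono[OF assms(1) 1] assms(3) by simp
  next
    case 2 then show ?thesis using hh_mono[OF assms(2) 2] assms(3) by simp
  qed
qed

lemma U_prop: "0 < U y \<and> hh (U y) = y"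
proof -
  obtain r where r: "0 < r" "hh r = y" using hh_surj by blast
  have "\<exists>!r. 0 < r \<and> hh r = y" using r hh_inj[of _ r] by auto
  then show ?thesis unfolding U_def by (rule theI')
qed

lemma U_pos: "0 < U y" using U_prop by blast
lemma hh_U: "hh (U y) = y" using U_prop by blast
lemma U_hh: "0 < r \<Longrightarrow> U (hh r) = r"
  using hh_inj[of "U (hh r)" r] U_pos hh_U by simp

lemma U_mono: assumes "y1 < y2" shows "U y1 < U y2"
proof (rule ccontr)
  assume "\<not> U y1 < U y2"
  then have "U y2 \<le> U y1" by simp
  then have "hh (U y2) \<le> hh (U y1)" using hh_mono[OF U_pos, of y2 "U y1"] by (cases "U y2 = U y1") auto
  then show False using assms by (simp add: hh_U)
qed
lemma U_mono_le: "y1 \<le> y2 \<Longrightarrow> U y1 \<le> U y2"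
  using U_mono[of y1 y2] by (cases "y1 = y2") auto

lemma U_isCont: "isCont U y"
proof -
  have "isCont U (hh (U y))"
    by (rule isCont_inverse_function2[where a="U y / 2" and b="U y + 1"])
       (use U_pos[of y] in \<open>auto intro!: U_hh hh_isCont\<close>)
  then show ?thesis by (simp add: hh_U)
qed

lemma cc_eq: "0 < r \<Longrightarrow> inverse (1/r + 1 - 1/(1+r)) = cc r"
  unfolding cc_def by (simp add: field_simps power2_eq_square)

lemma U_deriv: "(U has_real_derivative cc (U y)) (at y)"
proof -
  have "(U has_real_derivative inverse (1/U y + 1 - 1/(1+U y))) (at y)"
    by (rule DERIV_inverse_function[where f=hh and a="y-1" and b="y+1"])
       (use U_pos[of y] hh_deriv_pos[of "U y"] in \<open>auto intro!: hh_deriv U_isCont simp: hh_U\<close>)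
  then show ?thesis using cc_eq[OF U_pos] by simp
qed



lemma exp_hh: "0 < r \<Longrightarrow> exp (hh r) = r / (1 + r) * exp r"
  unfolding hh_def by (simp add: exp_diff exp_add)

lemma U_le_exp: "U y \<le> exp y"
proof -
  have "ln (U y) \<le> y" using hh_ge_ln[OF U_pos, of y] hh_U[of y] by simp
  then show ?thesis using U_pos[of y] by (metis exp_le_cancel_iff exp_ln)
qed

lemma Vfun_exp: "Vfun (exp y) = U y / (1 + U y)"
  unfolding Vfun_def
proof (rule the_equality)
  let ?u = "U y"
  have u: "0 < ?u" by (rule U_pos)
  have e: "?u / (1 + ?u) / (1 - ?u / (1 + ?u)) = ?u" using u by (simp add: field_simps)
  have "?u/(1+?u) * exp (?u/(1+?u)/(1 - ?u/(1+?u))) = ?u/(1+?u) * exp ?u" by (simp only: e)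
  also have "\<dots> = exp y" using exp_hh[OF u] hh_U[of y] by simp
  finally show "0 < ?u / (1 + ?u) \<and> ?u / (1 + ?u) < 1 \<and> ?u / (1 + ?u) * exp (?u / (1 + ?u) / (1 - ?u / (1 + ?u))) = exp y"
    using u by simp
next
  fix v assume v: "0 < v \<and> v < 1 \<and> v * exp (v / (1 - v)) = exp y"
  define r where "r = v / (1 - v)"
  have r: "0 < r" unfolding r_def using v by simp
  have vr: "v = r / (1 + r)" unfolding r_def using v by (simp add: field_simps)
  have "exp (hh r) = v * exp r" using exp_hh[OF r] vr by simp
  also have "\<dots> = exp y" using v unfolding r_def by simp
  finally have "exp (hh r) = exp y" .
  then have "hh r = y" by simp
  then have "r = U y" using U_hh[OF r] by simp
  then show "v = U y / (1 + U y)" using vr by simp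
qed

definition sg :: "real \<Rightarrow> real" where "sg r = r / (1 + r)"
definition uu :: "(nat \<Rightarrow> real) \<Rightarrow> nat \<Rightarrow> real \<Rightarrow> real" where
  "uu theta i L = U (L + theta i - 1)"
definition BT :: "(nat \<Rightarrow> real) \<Rightarrow> nat set \<Rightarrow> real \<Rightarrow> real" where
  "BT theta T L = exp L + (\<Sum>i\<in>T. sg (uu theta i L))"

lemma uu_pos: "0 < uu theta i L" unfolding uu_def by (rule U_pos)

lemma sg_pos: "0 < r \<Longrightarrow> 0 < sg r" unfolding sg_def by simp
lemma sg_lt1: "0 < r \<Longrightarrow> sg r < 1" unfolding sg_def by simp
lemma sg_le: "0 < r \<Longrightarrow> sg r \<le> r" unfolding sg_def by (simp add: field_simps)
lemma sg_mono: "0 < a \<Longrightarrow> a < b \<Longrightarrow> sg a < sg b" unfolding sg_def by (simp add: field_simps)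
lemma sg_mono_le: "0 < a \<Longrightarrow> a \<le> b \<Longrightarrow> sg a \<le> sg b" unfolding sg_def by (simp add: field_simps)
lemma sg_inv: "0 < r \<Longrightarrow> 1 - sg r = 1 / (1 + r)" unfolding sg_def by (simp add: field_simps)

lemma uu_mono: "L1 < L2 \<Longrightarrow> uu theta i L1 < uu theta i L2"
  unfolding uu_def by (rule U_mono) simp
lemma uu_mono_le: "L1 \<le> L2 \<Longrightarrow> uu theta i L1 \<le> uu theta i L2"
  unfolding uu_def by (rule U_mono_le) simp

lemma BT_mono: assumes "finite T" "L1 < L2" shows "BT theta T L1 < BT theta T L2"
proof -
  have "(\<Sum>i\<in>T. sg (uu theta i L1)) \<le> (\<Sum>i\<in>T. sg (uu theta i L2))"
    by (intro sum_mono sg_mono_le uu_pos uu_mono_le) (use assms in simp)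
  moreover have "exp L1 < exp L2" using assms by simp
  ultimately show ?thesis unfolding BT_def by linarith
qed

lemma BT_mono_le: "finite T \<Longrightarrow> L1 \<le> L2 \<Longrightarrow> BT theta T L1 \<le> BT theta T L2"
  using BT_mono[of T L1 L2 theta] by (cases "L1 = L2") auto

lemma uu_isCont: "isCont (uu theta i) L"
  unfolding uu_def[abs_def]
  by (rule continuous_intros U_isCont[THEN isCont_o2[rotated]] | simp)+

lemma BT_isCont: "isCont (BT theta T) L"
  unfolding BT_def[abs_def] sg_def
  by (intro continuous_intros uu_isCont) (smt (verit) uu_pos)



lemma Vfun_uu: "Vfun (exp L * exp (theta i - 1)) = sg (uu theta i L)"
proof -
  have "exp L * exp (theta i - 1) = exp (L + theta i - 1)" by (simp add: exp_add[symmetric])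
  then show ?thesis using Vfun_exp[of "L + theta i - 1"] unfolding sg_def uu_def by simp
qed

lemma BT_root: assumes "finite T" shows "\<exists>L. L \<le> 0 \<and> BT theta T L = 1"
proof -
  define K where "K = 1 + (\<Sum>i\<in>T. exp (theta i - 1))"
  have K1: "1 \<le> K" unfolding K_def by (simp add: sum_nonneg)
  define L1 where "L1 = - ln K"
  have L1: "L1 \<le> 0" unfolding L1_def using K1 by simp
  have eK: "exp L1 * K = 1" unfolding L1_def using K1 by (simp add: exp_minus field_simps)
  have "BT theta T L1 \<le> exp L1 + (\<Sum>i\<in>T. exp (L1 + theta i - 1))"
  proof -
    have "(\<Sum>i\<in>T. sg (uu theta i L1)) \<le> (\<Sum>i\<in>T. exp (L1 + theta i - 1))"
    proof (rule sum_mono)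
      fix i assume "i \<in> T"
      have "sg (uu theta i L1) \<le> uu theta i L1" by (rule sg_le[OF uu_pos])
      also have "\<dots> \<le> exp (L1 + theta i - 1)" unfolding uu_def by (rule U_le_exp)
      finally show "sg (uu theta i L1) \<le> exp (L1 + theta i - 1)" .
    qed
    then show ?thesis unfolding BT_def by simp
  qed
  also have "\<dots> = exp L1 * K"
    unfolding K_def by (simp add: distrib_left sum_distrib_left exp_add[symmetric] add_diff_eq)
  finally have b1: "BT theta T L1 \<le> 1" using eK by simp
  have b2: "1 \<le> BT theta T 0"
    unfolding BT_def by (simp add: sum_nonneg sg_pos uu_pos less_imp_le)
  have "\<exists>x. L1 \<le> x \<and> x \<le> 0 \<and> BT theta T x = 1"
    by (rule IVT[OF b1 b2 L1]) (simp add: BT_isCont)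
  then show ?thesis by auto
qed

lemma BT_unique: "finite T \<Longrightarrow> BT theta T L1 = 1 \<Longrightarrow> BT theta T L2 = 1 \<Longrightarrow> L1 = L2"
  using BT_mono[of T L1 L2 theta] BT_mono[of T L2 L1 theta] by (cases "L1 < L2"; cases "L2 < L1") auto

lemma sum_sg_pos: "finite T \<Longrightarrow> T \<noteq> {} \<Longrightarrow> 0 < (\<Sum>i\<in>T. sg (uu theta i L))"
  by (intro sum_pos sg_pos uu_pos) auto

lemma q0bar_eq: assumes T: "finite T" "T \<noteq> {}" and L: "BT theta T L = 1"
  shows "q0bar theta T = exp L"
  unfolding q0bar_def
proof (rule the_equality)
  have s: "(\<Sum>i\<in>T. Vfun (exp L * exp (theta i - 1))) = (\<Sum>i\<in>T. sg (uu theta i L))"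
    by (simp add: Vfun_uu)
  have "0 < (\<Sum>i\<in>T. sg (uu theta i L))" using sum_sg_pos[OF T] .
  then have "exp L < 1" using L unfolding BT_def by linarith
  then show "0 < exp L \<and> exp L < 1 \<and> (\<Sum>i\<in>T. Vfun (exp L * exp (theta i - 1))) = 1 - exp L"
    using L unfolding s BT_def by (simp del: exp_less_one_iff)
next
  fix q assume q: "0 < q \<and> q < 1 \<and> (\<Sum>i\<in>T. Vfun (q * exp (theta i - 1))) = 1 - q"
  have eq: "q = exp (ln q)" using q by simp
  have "(\<Sum>i\<in>T. Vfun (exp (ln q) * exp (theta i - 1))) = (\<Sum>i\<in>T. sg (uu theta i (ln q)))"
    by (simp add: Vfun_uu)
  then have "BT theta T (ln q) = 1" using q unfolding BT_def by simp
  then have "ln q = L" using BT_unique[OF T(1)] L by blast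
  then show "q = exp L" using eq by simp
qed

lemma qbar_eq: assumes "finite T" "T \<noteq> {}" "BT theta T L = 1"
  shows "qbar theta T i = sg (uu theta i L)"
  unfolding qbar_def q0bar_eq[OF assms] by (rule Vfun_uu)

lemma rebar_eq: assumes "finite T" "T \<noteq> {}" "BT theta T L = 1"
  shows "rebar theta T = (\<Sum>i\<in>T. uu theta i L)"
  unfolding rebar_def qbar_eq[OF assms]
proof (rule sum.cong[OF refl])
  fix i
  have u: "0 < uu theta i L" by (rule uu_pos)
  show "sg (uu theta i L) / (1 - sg (uu theta i L)) = uu theta i L"
    using u unfolding sg_def by (simp add: field_simps)
qed



definition ww :: "real \<Rightarrow> real" where "ww r = r / ((1 + r) * (1 + r + r\<^sup>2))"
definition ccd :: "real \<Rightarrow> real" where "ccd r = (1 + 2*r) / (1 + r + r\<^sup>2)\<^sup>2"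
definition wwd :: "real \<Rightarrow> real" where "wwd r = (1 - 2*r\<^sup>2 - 2*r^3) / ((1 + r)\<^sup>2 * (1 + r + r\<^sup>2)\<^sup>2)"

lemma den_pos: "0 < r \<Longrightarrow> 0 < 1 + r + (r::real)\<^sup>2"
  by (simp add: add_pos_nonneg)

lemma cc_deriv: assumes "0 < r" shows "(cc has_real_derivative ccd r) (at r)"
proof -
  have d: "0 < 1 + r + r\<^sup>2" using den_pos[OF assms] .
  have "((\<lambda>r. r * (1 + r) / (1 + r + r\<^sup>2)) has_real_derivative
     ((1 * (1 + r) + r * 1) * (1 + r + r\<^sup>2) - r * (1 + r) * (1 + 2 * r)) / (1 + r + r\<^sup>2)\<^sup>2) (at r)"
    using d by (auto intro!: derivative_eq_intros simp: power2_eq_square)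
  moreover have "((1 * (1 + r) + r * 1) * (1 + r + r\<^sup>2) - r * (1 + r) * (1 + 2 * r)) / (1 + r + r\<^sup>2)\<^sup>2 = ccd r"
    unfolding ccd_def by (simp add: algebra_simps power2_eq_square)
  ultimately show ?thesis unfolding cc_def[abs_def] by simp
qed

lemma ww_deriv: assumes "0 < r" shows "(ww has_real_derivative wwd r) (at r)"
proof -
  have d: "0 < 1 + r + r\<^sup>2" using den_pos[OF assms] .
  have d2: "0 < 1 + r" using assms by simp
  have "((\<lambda>r. r / ((1 + r) * (1 + r + r\<^sup>2))) has_real_derivative
     (1 * ((1 + r) * (1 + r + r\<^sup>2)) - r * (1 * (1 + r + r\<^sup>2) + (1 + r) * (1 + 2 * r))) / ((1 + r) * (1 + r + r\<^sup>2))\<^sup>2) (at r)"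
    using d d2 by (auto intro!: derivative_eq_intros simp: power2_eq_square)
  moreover have "(1 * ((1 + r) * (1 + r + r\<^sup>2)) - r * (1 * (1 + r + r\<^sup>2) + (1 + r) * (1 + 2 * r))) / ((1 + r) * (1 + r + r\<^sup>2))\<^sup>2 = wwd r"
    unfolding wwd_def by (simp add: algebra_simps power2_eq_square power3_eq_cube)
  ultimately show ?thesis unfolding ww_def[abs_def] by simp
qed

lemma sg_deriv: assumes "0 < r" shows "(sg has_real_derivative 1 / (1 + r)\<^sup>2) (at r)"
proof -
  have d2: "0 < 1 + r" using assms by simp
  have "((\<lambda>r. r / (1 + r)) has_real_derivative (1 * (1 + r) - r * 1) / (1 + r)\<^sup>2) (at r)"
    using d2 by (auto intro!: derivative_eq_intros simp: power2_eq_square)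
  then show ?thesis unfolding sg_def[abs_def] by simp
qed

lemma ww_cc: assumes "0 < r" shows "1 / (1 + r)\<^sup>2 * cc r = ww r"
proof -
  have d: "1 + r + r\<^sup>2 \<noteq> 0" using den_pos[OF assms] by simp
  have d2: "1 + r \<noteq> 0" using assms by simp
  show ?thesis unfolding ww_def cc_def using d d2 by (simp add: divide_simps power2_eq_square)
qed

lemma uu_deriv: "(uu theta i has_real_derivative cc (uu theta i L)) (at L)"
proof -
  have "((\<lambda>L. U (L + theta i - 1)) has_real_derivative cc (U (L + theta i - 1)) * 1) (at L)"
    by (rule DERIV_chain2[OF U_deriv]) (auto intro!: derivative_eq_intros)
  then show ?thesis unfolding uu_def[abs_def] by simp
qed

lemma comp_uu:
  assumes "(f has_real_derivative f' (uu theta i L)) (at (uu theta i L))"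
  shows "((\<lambda>L. f (uu theta i L)) has_real_derivative f' (uu theta i L) * cc (uu theta i L)) (at L)"
  by (rule DERIV_chain2[OF assms uu_deriv])



definition Af :: "(nat \<Rightarrow> real) \<Rightarrow> nat set \<Rightarrow> real \<Rightarrow> real" where
  "Af theta T L = (\<Sum>i\<in>T. uu theta i L)"
definition Ad :: "(nat \<Rightarrow> real) \<Rightarrow> nat set \<Rightarrow> real \<Rightarrow> real" where
  "Ad theta T L = (\<Sum>i\<in>T. cc (uu theta i L))"
definition Bd :: "(nat \<Rightarrow> real) \<Rightarrow> nat set \<Rightarrow> real \<Rightarrow> real" where
  "Bd theta T L = exp L + (\<Sum>i\<in>T. ww (uu theta i L))"
definition Add :: "(nat \<Rightarrow> real) \<Rightarrow> nat set \<Rightarrow> real \<Rightarrow> real" where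
  "Add theta T L = (\<Sum>i\<in>T. ccd (uu theta i L) * cc (uu theta i L))"
definition Bdd :: "(nat \<Rightarrow> real) \<Rightarrow> nat set \<Rightarrow> real \<Rightarrow> real" where
  "Bdd theta T L = exp L + (\<Sum>i\<in>T. wwd (uu theta i L) * cc (uu theta i L))"
definition Ff :: "(nat \<Rightarrow> real) \<Rightarrow> nat set \<Rightarrow> real \<Rightarrow> real" where
  "Ff theta T L = Af theta T L + 1 / BT theta T L - 1"
definition gg :: "(nat \<Rightarrow> real) \<Rightarrow> nat set \<Rightarrow> real \<Rightarrow> real" where
  "gg theta T L = (BT theta T L)\<^sup>2 * Ad theta T L - Bd theta T L"
definition ggd :: "(nat \<Rightarrow> real) \<Rightarrow> nat set \<Rightarrow> real \<Rightarrow> real" where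
  "ggd theta T L = 2 * BT theta T L * Bd theta T L * Ad theta T L
     + (BT theta T L)\<^sup>2 * Add theta T L - Bdd theta T L"

lemma BT_pos: "0 < BT theta T L"
  unfolding BT_def by (simp add: add_pos_nonneg sum_nonneg sg_pos uu_pos less_imp_le)

lemma Af_deriv: "(Af theta T has_real_derivative Ad theta T L) (at L)"
  unfolding Af_def[abs_def] Ad_def by (intro DERIV_sum uu_deriv)

lemma Ad_deriv: "(Ad theta T has_real_derivative Add theta T L) (at L)"
  unfolding Ad_def[abs_def] Add_def by (intro DERIV_sum comp_uu cc_deriv uu_pos)

lemma BT_deriv: "(BT theta T has_real_derivative Bd theta T L) (at L)"
proof -
  have "((\<lambda>L. exp L + (\<Sum>i\<in>T. sg (uu theta i L))) has_real_derivative
      exp L + (\<Sum>i\<in>T. 1 / (1 + uu theta i L)\<^sup>2 * cc (uu theta i L))) (at L)"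
    by (intro DERIV_add DERIV_exp DERIV_sum comp_uu sg_deriv uu_pos)
  moreover have eq: "(\<Sum>i\<in>T. 1 / (1 + uu theta i L)\<^sup>2 * cc (uu theta i L)) = (\<Sum>i\<in>T. ww (uu theta i L))"
    by (intro sum.cong refl ww_cc uu_pos)
  ultimately show ?thesis unfolding BT_def[abs_def] Bd_def by simp
qed

lemma Bd_deriv: "(Bd theta T has_real_derivative Bdd theta T L) (at L)"
  unfolding Bd_def[abs_def] Bdd_def by (intro DERIV_add DERIV_exp DERIV_sum comp_uu ww_deriv uu_pos)

lemma Ff_deriv: "(Ff theta T has_real_derivative gg theta T L / (BT theta T L)\<^sup>2) (at L)"
proof -
  have b: "BT theta T L \<noteq> 0" using BT_pos[of theta T L] by simp
  have i: "((\<lambda>L. inverse (BT theta T L)) has_real_derivative - (Bd theta T L * inverse ((BT theta T L) ^ Suc (Suc 0)))) (at L)"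
    by (rule DERIV_inverse_fun[OF BT_deriv b])
  have "((\<lambda>L. Af theta T L + inverse (BT theta T L) - 1) has_real_derivative
      Ad theta T L + - (Bd theta T L * inverse ((BT theta T L) ^ Suc (Suc 0))) - 0) (at L)"
    by (intro DERIV_diff DERIV_add Af_deriv i DERIV_const)
  moreover have "Ad theta T L + - (Bd theta T L * inverse ((BT theta T L) ^ Suc (Suc 0))) - 0
      = gg theta T L / (BT theta T L)\<^sup>2"
    unfolding gg_def using b by (simp add: field_simps power2_eq_square)
  ultimately show ?thesis unfolding Ff_def[abs_def] by (simp add: divide_inverse)
qed

lemma gg_deriv: "(gg theta T has_real_derivative ggd theta T L) (at L)"
proof -
  note d = DERIV_diff[OF DERIV_mult[OF DERIV_power[OF BT_deriv] Ad_deriv] Bd_deriv]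
  show ?thesis unfolding gg_def[abs_def] ggd_def
    by (rule DERIV_cong[OF d]) (simp add: algebra_simps power2_eq_square)
qed



lemma Q_pos:
  fixes r B :: real
  assumes r: "0 < r" and B: "r / (1 + r) \<le> B"
  shows "0 < 2 * B^3 * ((1 + r) * (1 + r + r\<^sup>2)) - B\<^sup>2 * (r * (3 + 2*r + r\<^sup>2)) + (2 + r)"
proof -
  define a where "a = (1 + r) * (1 + r + r\<^sup>2)"
  define b where "b = r * (3 + 2*r + r\<^sup>2)"
  define s where "s = r / (1 + r)"
  have s0: "0 < s" unfolding s_def using r by simp
  have Bs: "s \<le> B" using B unfolding s_def .
  have a0: "0 < a" unfolding a_def using r by (simp add: add_pos_nonneg)
  have as: "a * s = r * (1 + r + r\<^sup>2)" unfolding a_def s_def using r by (simp add: field_simps)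
  have h1: "0 \<le> 3 * (a * s) - b" unfolding as b_def using r by (simp add: algebra_simps power2_eq_square)
  have h2: "0 \<le> (B - s) * (2 * B + s)" using Bs s0 by simp
  have br: "2 * a * (B\<^sup>2 + B * s + s\<^sup>2) - b * (B + s) = a * ((B - s) * (2 * B + s)) + (3 * (a * s) - b) * (B + s)"
    by (simp add: algebra_simps power2_eq_square)
  have "0 \<le> a * ((B - s) * (2 * B + s))" using a0 h2 by simp
  moreover have "0 \<le> (3 * (a * s) - b) * (B + s)" using h1 s0 Bs by simp
  ultimately have brp: "0 \<le> 2 * a * (B\<^sup>2 + B * s + s\<^sup>2) - b * (B + s)" unfolding br by linarith
  have diff: "(2 * B^3 * a - B\<^sup>2 * b + (2 + r)) - (2 * s^3 * a - s\<^sup>2 * b + (2 + r))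
      = (B - s) * (2 * a * (B\<^sup>2 + B * s + s\<^sup>2) - b * (B + s))"
    by (simp add: algebra_simps power2_eq_square power3_eq_cube)
  have "0 \<le> (B - s) * (2 * a * (B\<^sup>2 + B * s + s\<^sup>2) - b * (B + s))" using Bs brp by simp
  moreover have "0 < 2 * s^3 * a - s\<^sup>2 * b + (2 + r)"
  proof -
    have sr: "s * (1 + r) = r" unfolding s_def using r by simp
    have "(2 * s^3 * a - s\<^sup>2 * b + (2 + r)) * (1 + r)\<^sup>2
        = 2 * (s * (1 + r))\<^sup>2 * (a * s) - (s * (1 + r))\<^sup>2 * b + (2 + r) * (1 + r)\<^sup>2"
      by (simp add: algebra_simps power2_eq_square power3_eq_cube)
    also have "\<dots> = r^5 + 4*r\<^sup>2 + 5*r + 2"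
      unfolding sr as b_def by (simp add: algebra_simps power2_eq_square power3_eq_cube eval_nat_numeral)
    finally have eq: "(2 * s^3 * a - s\<^sup>2 * b + (2 + r)) * (1 + r)\<^sup>2 = r^5 + 4*r\<^sup>2 + 5*r + 2" .
    have "0 < r^5 + 4*r\<^sup>2 + 5*r + 2" using r by (simp add: add_pos_nonneg)
    then have "0 < (2 * s^3 * a - s\<^sup>2 * b + (2 + r)) * (1 + r)\<^sup>2" using eq by simp
    moreover have "0 < (1 + r)\<^sup>2" using r by simp
    ultimately show ?thesis by (simp add: zero_less_mult_iff)
  qed
  ultimately have "0 < 2 * B^3 * a - B\<^sup>2 * b + (2 + r)" using diff by linarith
  then show ?thesis unfolding a_def b_def .
qed

lemma term_eq:
  fixes r B :: real
  assumes r: "0 < r"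
  shows "2 * B^3 * (cc r)\<^sup>2 + (B\<^sup>2 * (cc r * (ccd r - 1)) + ww r - wwd r * cc r)
    = r\<^sup>2 * (1 + r) / (1 + r + r\<^sup>2)^3 * (2 * B^3 * ((1 + r) * (1 + r + r\<^sup>2)) - B\<^sup>2 * (r * (3 + 2*r + r\<^sup>2)) + (2 + r))"
proof -
  have d: "1 + r + r\<^sup>2 \<noteq> 0" using den_pos[OF r] by simp
  have d2: "1 + r \<noteq> 0" using r by simp
  show ?thesis unfolding cc_def ccd_def ww_def wwd_def using d d2
    by (simp add: divide_simps) (simp add: algebra_simps power2_eq_square power3_eq_cube eval_nat_numeral)
qed

lemma term_pos:
  fixes r B :: real
  assumes r: "0 < r" and B: "r / (1 + r) \<le> B"
  shows "0 < 2 * B^3 * (cc r)\<^sup>2 + (B\<^sup>2 * (cc r * (ccd r - 1)) + ww r - wwd r * cc r)"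
  unfolding term_eq[OF r]
proof (rule mult_pos_pos)
  show "0 < r\<^sup>2 * (1 + r) / (1 + r + r\<^sup>2)^3" using r den_pos[OF r] by simp
qed (rule Q_pos[OF r B])

lemma sum_sq_le:
  fixes f :: "nat \<Rightarrow> real"
  assumes "finite T" "\<And>i. i \<in> T \<Longrightarrow> 0 \<le> f i"
  shows "(\<Sum>i\<in>T. (f i)\<^sup>2) \<le> (\<Sum>i\<in>T. f i)\<^sup>2"
proof -
  have "(\<Sum>i\<in>T. (f i)\<^sup>2) = (\<Sum>i\<in>T. f i * f i)" by (simp add: power2_eq_square)
  also have "\<dots> \<le> (\<Sum>i\<in>T. f i * (\<Sum>j\<in>T. f j))"
    by (intro sum_mono mult_left_mono member_le_sum assms) (auto intro: assms)
  also have "\<dots> = (\<Sum>i\<in>T. f i)\<^sup>2" by (simp add: power2_eq_square sum_distrib_right)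
  finally show ?thesis .
qed

lemma ggd_pos:
  assumes T: "finite T" "T \<noteq> {}" and g0: "gg theta T L = 0"
  shows "0 < ggd theta T L"
proof -
  define B where "B = BT theta T L"
  define u where "u = (\<lambda>i. uu theta i L)"
  define t where "t = (\<lambda>i. B\<^sup>2 * (cc (u i) * (ccd (u i) - 1)) + ww (u i) - wwd (u i) * cc (u i))"
  have B0: "0 < B" unfolding B_def by (rule BT_pos)
  have Bge: "\<And>i. i \<in> T \<Longrightarrow> u i / (1 + u i) \<le> B"
  proof -
    fix i assume i: "i \<in> T"
    have "sg (u i) \<le> (\<Sum>j\<in>T. sg (u j))"
      by (rule member_le_sum[OF i _ T(1)]) (simp add: sg_pos uu_pos u_def less_imp_le)
    then show "u i / (1 + u i) \<le> B" unfolding B_def BT_def u_def sg_def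
      by (smt (verit) exp_gt_zero)
  qed
  have bd: "Bd theta T L = B\<^sup>2 * Ad theta T L" using g0 unfolding gg_def B_def by simp
  have ex: "exp L = B\<^sup>2 * Ad theta T L - (\<Sum>i\<in>T. ww (u i))"
    using bd unfolding Bd_def u_def by simp
  have "ggd theta T L = 2 * B^3 * (Ad theta T L)\<^sup>2 + (B\<^sup>2 * Add theta T L - B\<^sup>2 * Ad theta T L
        + (\<Sum>i\<in>T. ww (u i)) - (\<Sum>i\<in>T. wwd (u i) * cc (u i)))"
    unfolding ggd_def bd Bdd_def ex B_def[symmetric] u_def[symmetric]
    by (simp add: u_def algebra_simps power2_eq_square power3_eq_cube)
  also have "B\<^sup>2 * Add theta T L - B\<^sup>2 * Ad theta T L + (\<Sum>i\<in>T. ww (u i)) - (\<Sum>i\<in>T. wwd (u i) * cc (u i))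
      = (\<Sum>i\<in>T. t i)"
    unfolding t_def Add_def Ad_def u_def
    by (simp add: u_def sum.distrib sum_subtractf sum_distrib_left algebra_simps)
  finally have eq: "ggd theta T L = 2 * B^3 * (Ad theta T L)\<^sup>2 + (\<Sum>i\<in>T. t i)" .
  have "(\<Sum>i\<in>T. (cc (u i))\<^sup>2) \<le> (Ad theta T L)\<^sup>2"
    unfolding Ad_def u_def
    by (rule sum_sq_le[OF T(1)]) (simp add: cc_def uu_pos less_imp_le)
  then have le: "2 * B^3 * (\<Sum>i\<in>T. (cc (u i))\<^sup>2) \<le> 2 * B^3 * (Ad theta T L)\<^sup>2"
    using B0 by simp
  have "0 < (\<Sum>i\<in>T. 2 * B^3 * (cc (u i))\<^sup>2 + t i)"
  proof (rule sum_pos[OF T])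
    fix i assume i: "i \<in> T"
    show "0 < 2 * B^3 * (cc (u i))\<^sup>2 + t i"
      unfolding t_def by (rule term_pos[OF _ Bge[OF i]]) (simp add: u_def uu_pos)
  qed
  then have "0 < 2 * B^3 * (\<Sum>i\<in>T. (cc (u i))\<^sup>2) + (\<Sum>i\<in>T. t i)"
    by (simp add: sum.distrib sum_distrib_left)
  then show ?thesis unfolding eq using le by linarith
qed



lemma gg_isCont: "isCont (gg theta T) L"
  using gg_deriv DERIV_isCont by blast

lemma Ff_isCont: "isCont (Ff theta T) L"
  using Ff_deriv DERIV_isCont by blast

lemma gg_cross:
  assumes T: "finite T" "T \<noteq> {}" and gx: "0 < gg theta T x" and xy: "x \<le> y"
  shows "0 < gg theta T y"
proof (rule ccontr)
  assume "\<not> 0 < gg theta T y"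
  then have gy: "gg theta T y \<le> 0" by simp
  define Z where "Z = {x..y} \<inter> {t. gg theta T t \<le> (\<lambda>_. 0) t}"
  have cont: "continuous_on UNIV (gg theta T)"
    by (intro continuous_at_imp_continuous_on ballI gg_isCont)
  have "closed {t. gg theta T t \<le> (\<lambda>_. 0) t}"
    by (rule closed_Collect_le[OF cont]) (simp add: continuous_on_const)
  then have cZ: "compact Z" unfolding Z_def by (intro compact_Int_closed compact_Icc)
  have "y \<in> Z" unfolding Z_def using xy gy by simp
  then have "Z \<noteq> {}" by blast
  then obtain z where zZ: "z \<in> Z" and zmin: "\<And>t. t \<in> Z \<Longrightarrow> z \<le> t"
    using compact_attains_inf[OF cZ] by blast
  have z1: "x \<le> z" "z \<le> y" "gg theta T z \<le> 0" using zZ unfolding Z_def by auto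
  have xz: "x < z" using z1 gx by (cases "x = z") auto
  have pos: "\<And>t. x \<le> t \<Longrightarrow> t < z \<Longrightarrow> 0 < gg theta T t"
  proof -
    fix t assume "x \<le> t" "t < z"
    then have "t \<notin> Z" using zmin by force
    then show "0 < gg theta T t" unfolding Z_def using \<open>x \<le> t\<close> \<open>t < z\<close> z1 by auto
  qed
  have gz: "gg theta T z = 0"
  proof -
    have "\<exists>t. x \<le> t \<and> t \<le> z \<and> gg theta T t = 0"
      by (rule IVT2[where f="gg theta T" and a=x and b=z and y=0]) (use gx gg_isCont z1 xz in auto)
    then obtain t where t: "x \<le> t" "t \<le> z" "gg theta T t = 0" by blast
    then have "t \<in> Z" unfolding Z_def using z1 by auto
    then have "t = z" using zmin t by force
    then show ?thesis using t by simp
  qed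
  have "0 < ggd theta T z" by (rule ggd_pos[OF T gz])
  then obtain d where d: "0 < d" "\<And>h. 0 < h \<Longrightarrow> h < d \<Longrightarrow> gg theta T (z - h) < gg theta T z"
    using DERIV_pos_inc_left[OF gg_deriv] by blast
  define h where "h = min (d / 2) (z - x)"
  have h: "0 < h" "h < d" "x \<le> z - h" "z - h < z" unfolding h_def using d xz by auto
  have "gg theta T (z - h) < 0" using d(2)[OF h(1) h(2)] gz by simp
  moreover have "0 < gg theta T (z - h)" using pos[OF h(3) h(4)] .
  ultimately show False by simp
qed

lemma Ff_core:
  assumes T: "finite T" "T \<noteq> {}" and L12: "L1 \<le> L2" and L20: "L2 < L0"
    and F02: "Ff theta T L0 \<le> Ff theta T L2"
  shows "Ff theta T L2 \<le> Ff theta T L1"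
proof (rule ccontr)
  assume "\<not> Ff theta T L2 \<le> Ff theta T L1"
  then have lt: "Ff theta T L1 < Ff theta T L2" by simp
  then have L12': "L1 < L2" using L12 by (cases "L1 = L2") auto
  have "\<exists>l z. L1 < z \<and> z < L2 \<and> DERIV (Ff theta T) z :> l \<and> Ff theta T L2 - Ff theta T L1 = (L2 - L1) * l"
    by (rule MVT[OF L12']) (auto intro!: continuous_at_imp_continuous_on Ff_isCont
        intro: DERIV_isCont Ff_deriv simp: real_differentiable_def)
  then obtain l z where z: "L1 < z" "z < L2" "DERIV (Ff theta T) z :> l"
      "Ff theta T L2 - Ff theta T L1 = (L2 - L1) * l" by blast
  have "l = gg theta T z / (BT theta T z)\<^sup>2" using DERIV_unique[OF z(3) Ff_deriv] .
  moreover have "0 < l"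
  proof -
    have "0 < (L2 - L1) * l" using z(4) lt by linarith
    then show ?thesis using L12' by (simp add: zero_less_mult_iff)
  qed
  ultimately have "0 < gg theta T z" using BT_pos[of theta T z] by (simp add: zero_less_divide_iff)
  then have gpos: "\<And>t. z \<le> t \<Longrightarrow> 0 < gg theta T t" using gg_cross[OF T] by blast
  have "Ff theta T L2 < Ff theta T L0"
  proof (rule DERIV_pos_imp_increasing[OF L20])
    fix t assume "L2 \<le> t" "t \<le> L0"
    then have "0 < gg theta T t" using gpos z(2) by simp
    then have "0 < gg theta T t / (BT theta T t)\<^sup>2" using BT_pos[of theta T t] by simp
    then show "\<exists>y. DERIV (Ff theta T) t :> y \<and> 0 < y" using Ff_deriv by blast
  qed
  with F02 show False by simp
qed



lemma BT_insert: "finite T \<Longrightarrow> x \<notin> T \<Longrightarrow> BT theta (insert x T) L = BT theta T L + sg (uu theta x L)"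
  unfolding BT_def by simp

lemma Ff_insert:
  assumes T: "finite T" and x: "x \<notin> T" and L: "BT theta (insert x T) L = 1"
  shows "Ff theta T L = rebar theta (insert x T)"
proof -
  have r: "rebar theta (insert x T) = uu theta x L + Af theta T L"
    using rebar_eq[of "insert x T" theta L] T x L unfolding Af_def by simp
  have "BT theta T L = 1 - sg (uu theta x L)" using L BT_insert[OF T x] by simp
  also have "\<dots> = 1 / (1 + uu theta x L)" by (rule sg_inv[OF uu_pos])
  finally have "1 / BT theta T L = 1 + uu theta x L" by simp
  then show ?thesis unfolding Ff_def r by simp
qed

lemma Ff_root:
  assumes T: "finite T" "T \<noteq> {}" and L: "BT theta T L = 1"
  shows "Ff theta T L = rebar theta T"
  unfolding Ff_def rebar_eq[OF T L] Af_def L by simp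

lemma swap:
  assumes S: "finite S" and j: "j \<in> S" and i: "i \<notin> S" and c: "2 \<le> card S"
    and th: "theta j \<le> theta i"
    and rem: "rebar theta (S - {j}) \<le> rebar theta S"
  shows "rebar theta S \<le> rebar theta (insert i (S - {j}))"
proof -
  define T where "T = S - {j}"
  have Tf: "finite T" unfolding T_def using S by simp
  have cT: "card T = card S - 1" unfolding T_def using S j by simp
  then have Tne: "T \<noteq> {}" using c Tf by auto
  have jT: "j \<notin> T" and iT: "i \<notin> T" unfolding T_def using i by auto
  have ST: "S = insert j T" unfolding T_def using j by auto
  obtain L0 where L0: "BT theta T L0 = 1" using BT_root[OF Tf] by blast
  obtain Lj where Lj: "BT theta (insert j T) Lj = 1" using BT_root[of "insert j T"] Tf by blast
  obtain Li where Li: "BT theta (insert i T) Li = 1" using BT_root[of "insert i T"] Tf by blast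
  have FL0: "Ff theta T L0 = rebar theta T" by (rule Ff_root[OF Tf Tne L0])
  have FLj: "Ff theta T Lj = rebar theta S" unfolding ST by (rule Ff_insert[OF Tf jT Lj])
  have FLi: "Ff theta T Li = rebar theta (insert i T)" by (rule Ff_insert[OF Tf iT Li])
  have Lj0: "Lj < L0"
  proof (rule ccontr)
    assume "\<not> Lj < L0"
    then have "BT theta T L0 \<le> BT theta T Lj" using BT_mono_le[OF Tf] by simp
    moreover have "BT theta T Lj = 1 - sg (uu theta j Lj)" using Lj BT_insert[OF Tf jT] by simp
    moreover have "0 < sg (uu theta j Lj)" by (rule sg_pos[OF uu_pos])
    ultimately show False using L0 by simp
  qed
  have Lij: "Li \<le> Lj"
  proof (rule ccontr)
    assume "\<not> Li \<le> Lj"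
    then have lt: "Lj < Li" by simp
    have "BT theta T Lj < BT theta T Li" by (rule BT_mono[OF Tf lt])
    moreover have "uu theta j Lj < uu theta i Li" unfolding uu_def
      by (rule U_mono) (use lt th in simp)
    then have "sg (uu theta j Lj) < sg (uu theta i Li)" by (rule sg_mono[OF uu_pos])
    ultimately have "BT theta (insert j T) Lj < BT theta (insert i T) Li"
      using BT_insert[OF Tf jT] BT_insert[OF Tf iT] by simp
    then show False using Li Lj by simp
  qed
  have "Ff theta T Lj \<le> Ff theta T Li"
    by (rule Ff_core[OF Tf Tne Lij Lj0]) (use FL0 FLj rem T_def in simp)
  then show ?thesis using FLj FLi unfolding T_def by simp
qed

lemma main_ind:
  assumes mono: "\<And>i j. 1 \<le> i \<Longrightarrow> i \<le> j \<Longrightarrow> j \<le> n \<Longrightarrow> theta j \<le> theta i"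
    and k2: "2 \<le> k"
  shows "is_rebar_max n theta S \<Longrightarrow> card S = k \<Longrightarrow> card (S - {1..k}) = m \<Longrightarrow> is_rebar_max n theta {1..k}"
proof (induction m arbitrary: S rule: less_induct)
  case (less m)
  have Smax: "is_rebar_max n theta S" and cS: "card S = k" using less.prems by auto
  have Ssub: "S \<subseteq> {1..n}" and Sne: "S \<noteq> {}"
    and Sbest: "\<And>T. T \<subseteq> {1..n} \<Longrightarrow> T \<noteq> {} \<Longrightarrow> rebar theta T \<le> rebar theta S"
    using Smax unfolding is_rebar_max_def by auto
  have Sf: "finite S" using Ssub finite_subset by blast
  have kn: "k \<le> n" using card_mono[OF _ Ssub] cS by simp
  show ?case
  proof (cases "S = {1..k}")
    case True then show ?thesis using Smax by simp
  next
    case False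
    have "\<not> S \<subseteq> {1..k}"
    proof
      assume "S \<subseteq> {1..k}"
      then have "S = {1..k}" using card_subset_eq[of "{1..k}" S] cS by simp
      with False show False by simp
    qed
    then obtain j where j: "j \<in> S" "j \<notin> {1..k}" by blast
    have jk: "k < j" "j \<le> n" using j Ssub by auto
    have "\<not> {1..k} \<subseteq> S"
    proof
      assume "{1..k} \<subseteq> S"
      then have "{1..k} = S" using card_subset_eq[OF Sf] cS by simp
      with False show False by simp
    qed
    then obtain i where i: "i \<in> {1..k}" "i \<notin> S" by blast
    have th: "theta j \<le> theta i" using mono[of i j] i jk by simp
    have rem: "rebar theta (S - {j}) \<le> rebar theta S"
    proof (rule Sbest)
      show "S - {j} \<subseteq> {1..n}" using Ssub by auto
      have "card (S - {j}) = k - 1" using Sf j cS by simp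
      then have "card (S - {j}) \<noteq> 0" using k2 by linarith
      then show "S - {j} \<noteq> {}" by (metis card.empty)
    qed
    define S2 where "S2 = insert i (S - {j})"
    have up: "rebar theta S \<le> rebar theta S2"
      unfolding S2_def by (rule swap[OF Sf j(1) i(2) _ th rem]) (use cS k2 in simp)
    have S2max: "is_rebar_max n theta S2"
      unfolding is_rebar_max_def
    proof (intro conjI allI impI)
      show "S2 \<subseteq> {1..n}" unfolding S2_def using Ssub i kn by auto
      show "S2 \<noteq> {}" unfolding S2_def by simp
      fix T assume "T \<subseteq> {1..n} \<and> T \<noteq> {}"
      then have "rebar theta T \<le> rebar theta S" using Sbest by blast
      then show "rebar theta T \<le> rebar theta S2" using up by linarith
    qed
    have c1: "card (S - {j}) = k - 1" using Sf j cS by simp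
    have "card S2 = Suc (card (S - {j}))" unfolding S2_def
      by (rule card_insert_disjoint) (use Sf i in auto)
    then have cS2: "card S2 = k" using c1 k2 by simp
    have eqd: "S2 - {1..k} = (S - {1..k}) - {j}" unfolding S2_def using i j by auto
    have "card (S2 - {1..k}) < card (S - {1..k})"
      unfolding eqd by (rule card_Diff1_less) (use Sf j in auto)
    then have "card (S2 - {1..k}) < m" using less.prems by simp
    then show ?thesis using less.IH S2max cS2 by blast
  qed
qed

theorem theorem9:
  fixes n :: nat and theta :: "nat \<Rightarrow> real" and S :: "nat set"
  assumes mono: "\<And>i j. 1 \<le> i \<Longrightarrow> i \<le> j \<Longrightarrow> j \<le> n \<Longrightarrow> theta j \<le> theta i"
    and nonneg: "\<And>i. 1 \<le> i \<Longrightarrow> i \<le> n \<Longrightarrow> 0 \<le> theta i"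
    and Smax: "is_rebar_max n theta S"
    and card3: "card S \<ge> 3"
  shows "is_rebar_max n theta {1..card S}"
  using main_ind[OF mono, where k="card S" and S=S and m="card (S - {1..card S})"] Smax card3 by simp

end
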